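(* Let $\mathcal C$ be a finite set and $P(\cdot\mid\cdot)$ a transition kernel on $\mathcal C$ with stationary distribution $\pi$, and assume $\delta:=\min_{a,a'\in\mathcal C}P(a'\mid a)>0$. For each $m\in\mathbb N$ let $\boldsymbol X=\{X_{ij}\}_{1\le i,j\le m}$ be a random $m\times m$ array over $\mathcal C$ generated according to either Scenario 1 (the $m$ columns are independent Markov chains, read top to bottom, with initial distribution $\pi$ and kernel $P$) or Scenario 2 (the $m$ rows are independent Markov chains, read left to right, with initial distribution $\pi$ and kernel $P$). Let $H_\infty=-\sum_{a,a'\in\mathcal C}\pi(a)P(a'\mid a)\log P(a'\mid a)$. Then for every sufficiently large integer $D$ there exist a dictionary $\operatorname{Dict}$ of tokens with $|\operatorname{Dict}|\le D$, each token being a nonempty finite string over $\mathcal C$, and for each $m$ an encoding $\operatorname{enc}$ mapping each $m\times m$ array over $\mathcal C$ to a finite sequence of tokens in $\operatorname{Dict}$ such that concatenating the tokens of $\operatorname{enc}(\boldsymbol X)$ yields the entries of $\boldsymbol X$ read column by column from top to bottom (Scenario 1), respectively row by row from left to right (Scenario 2), and such that $$\limsup_{m\to\infty}\ \min_{Q\in\mathcal Q_{\text{1-gram}}}\ -\frac{1}{m^2}\mathbb E\big[\log Q(\operatorname{enc}(\boldsymbol X))\big]\ \le\ \frac{1}{1-\varepsilon}H_\infty,\qquad \varepsilon=\frac{\log(1/\delta)}{0.99\log D}.$$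
   Context: A unigram model $Q\in\mathcal Q_{\text{1-gram}}$ over the token dictionary $\operatorname{Dict}$ is specified by a probability distribution $Q_\#$ on $\mathbb N$ and a probability distribution $Q_{\text{tok}}$ on $\operatorname{Dict}$, and assigns to a token sequence $\mathbf t=(t_1,\dots,t_{|\mathbf t|})$ the probability $Q(\mathbf t)=Q_\#(|\mathbf t|)\prod_{r=1}^{|\mathbf t|}Q_{\text{tok}}(t_r)$. Logarithms are natural. *)

theory Defs
  imports "HOL-Analysis.Analysis"
begin

text \<open>Alphabet C is a finite type 'a. Kernel: P a a' = P(a' | a).\<close>

definition markov_kernel :: "('a::finite \<Rightarrow> 'a \<Rightarrow> real) \<Rightarrow> bool" where
  "markov_kernel P \<longleftrightarrow> (\<forall>a a'. P a a' \<ge> 0) \<and> (\<forall>a. (\<Sum>a'\<in>UNIV. P a a') = 1)"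

definition stationary :: "('a::finite \<Rightarrow> 'a \<Rightarrow> real) \<Rightarrow> ('a \<Rightarrow> real) \<Rightarrow> bool" where
  "stationary P \<pi> \<longleftrightarrow> (\<forall>a. \<pi> a \<ge> 0) \<and> (\<Sum>a\<in>UNIV. \<pi> a) = 1 \<and>
     (\<forall>a'. (\<Sum>a\<in>UNIV. \<pi> a * P a a') = \<pi> a')"

definition min_trans :: "('a::finite \<Rightarrow> 'a \<Rightarrow> real) \<Rightarrow> real" where
  "min_trans P = Min {P a a' | a a'. True}"

definition entropy_rate :: "('a::finite \<Rightarrow> 'a \<Rightarrow> real) \<Rightarrow> ('a \<Rightarrow> real) \<Rightarrow> real" where
  "entropy_rate P \<pi> = - (\<Sum>a\<in>UNIV. \<Sum>a'\<in>UNIV. \<pi> a * P a a' * ln (P a a'))"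

text \<open>m x m arrays over C: functions X i j (row i, column j), indices 0..m-1,
  extensional (undefined outside the index range).\<close>

definition arrays :: "nat \<Rightarrow> (nat \<Rightarrow> nat \<Rightarrow> 'a) set" where
  "arrays m = {X. \<forall>i j. \<not> (i < m \<and> j < m) \<longrightarrow> X i j = undefined}"

definition array_prob :: "nat \<Rightarrow> ('a \<Rightarrow> 'a \<Rightarrow> real) \<Rightarrow> ('a \<Rightarrow> real) \<Rightarrow> nat \<Rightarrow> (nat \<Rightarrow> nat \<Rightarrow> 'a) \<Rightarrow> real" where
  "array_prob s P \<pi> m X =
     (if s = 1 then (\<Prod>j<m. \<pi> (X 0 j) * (\<Prod>i<m - 1. P (X i j) (X (Suc i) j)))
      else (\<Prod>i<m. \<pi> (X i 0) * (\<Prod>j<m - 1. P (X i j) (X i (Suc j)))))"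

definition read_array :: "nat \<Rightarrow> nat \<Rightarrow> (nat \<Rightarrow> nat \<Rightarrow> 'a) \<Rightarrow> 'a list" where
  "read_array s m X =
     (if s = 1 then concat (map (\<lambda>j. map (\<lambda>i. X i j) [0..<m]) [0..<m])
      else concat (map (\<lambda>i. map (\<lambda>j. X i j) [0..<m]) [0..<m]))"

text \<open>Unigram models over the dictionary: a length distribution qn on nat
  and a token distribution qt on Dict.\<close>

definition unigram_models :: "'a list set \<Rightarrow> ((nat \<Rightarrow> real) \<times> ('a list \<Rightarrow> real)) set" where
  "unigram_models Dict = {(qn, qt). (\<forall>n. qn n \<ge> 0) \<and> qn sums 1 \<and>
      (\<forall>t\<in>Dict. qt t \<ge> 0) \<and> (\<Sum>t\<in>Dict. qt t) = 1}"

definition unigram_prob :: "((nat \<Rightarrow> real) \<times> ('a list \<Rightarrow> real)) \<Rightarrow> 'a list list \<Rightarrow> real" where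
  "unigram_prob Q ts = fst Q (length ts) * prod_list (map (snd Q) ts)"

definition neg_log :: "real \<Rightarrow> ereal" where
  "neg_log p = (if p > 0 then ereal (- ln p) else \<infinity>)"

definition best_unigram_loss ::
  "nat \<Rightarrow> ('a::finite \<Rightarrow> 'a \<Rightarrow> real) \<Rightarrow> ('a \<Rightarrow> real) \<Rightarrow> 'a list set \<Rightarrow>
   ((nat \<Rightarrow> nat \<Rightarrow> 'a) \<Rightarrow> 'a list list) \<Rightarrow> nat \<Rightarrow> ereal" where
  "best_unigram_loss s P \<pi> Dict enc m =
     (INF Q\<in>unigram_models Dict.
        ereal (1 / (real m)^2) *
        (\<Sum>X\<in>arrays m. ereal (array_prob s P \<pi> m X) * neg_log (unigram_prob Q (enc X))))"

end

theory Submission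
  imports Defs
begin


lemma finite_len: "finite {y::'a::finite list. length y = n}"
  using finite_lists_length_eq[of "UNIV::'a set" n] by simp

lemma sum_len_Suc:
  "(\<Sum>y\<in>{y::'a::finite list. length y = Suc n}. f y) =
   (\<Sum>y\<in>{y. length y = n}. \<Sum>c\<in>UNIV. f (y @ [c]))"
proof -
  have eq: "{y::'a list. length y = Suc n} = (\<lambda>(y,c). y@[c]) ` ({y. length y = n} \<times> UNIV)"
  proof (rule set_eqI, rule iffI)
    fix y :: "'a list" assume "y \<in> {y. length y = Suc n}"
    then have "y = butlast y @ [last y]" "length (butlast y) = n"
      by (auto intro!: append_butlast_last_id[symmetric])
    then show "y \<in> (\<lambda>(y,c). y@[c]) ` ({y. length y = n} \<times> UNIV)"
      by (metis (mono_tags, lifting) SigmaI UNIV_I case_prod_conv image_eqI mem_Collect_eq)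
  qed auto
  have inj: "inj_on (\<lambda>(y,c). y@[c]) ({y::'a list. length y = n} \<times> UNIV)"
    by (auto simp: inj_on_def)
  show ?thesis
    unfolding eq by (subst sum.reindex[OF inj]) (simp add: sum.cartesian_product split_def)
qed

lemma sum_len_Cons:
  "(\<Sum>y\<in>{y::'a::finite list. length y = Suc n}. f y) =
   (\<Sum>c\<in>UNIV. \<Sum>y\<in>{y. length y = n}. f (c # y))"
proof -
  have eq: "{y::'a list. length y = Suc n} = (\<lambda>(c,y). c#y) ` (UNIV \<times> {y. length y = n})"
    by (auto simp: length_Suc_conv image_iff)
  have inj: "inj_on (\<lambda>(c,y). c#y) (UNIV \<times> {y::'a list. length y = n})"
    by (auto simp: inj_on_def)
  show ?thesis
    unfolding eq by (subst sum.reindex[OF inj]) (simp add: sum.cartesian_product split_def)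
qed

definition cpm :: "('a \<Rightarrow> 'a \<Rightarrow> real) \<Rightarrow> ('a \<Rightarrow> real) \<Rightarrow> nat \<Rightarrow> 'a list \<Rightarrow> real" where
  "cpm P \<pi> m y = (\<Prod>k<length y. if k mod m = 0 then \<pi> (y!k) else P (y!(k-1)) (y!k))"

lemma cpm_snoc:
  "cpm P \<pi> m (y @ [c]) = cpm P \<pi> m y *
     (if length y mod m = 0 then \<pi> c else P (last y) c)"
proof -
  have "cpm P \<pi> m (y @ [c]) = (\<Prod>k<length y. if k mod m = 0 then \<pi> ((y@[c])!k) else P ((y@[c])!(k-1)) ((y@[c])!k)) *
     (if length y mod m = 0 then \<pi> c else P ((y@[c])!(length y - 1)) c)"
    unfolding cpm_def by (simp only: length_append_singleton prod.lessThan_Suc nth_append_length)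
  moreover have "length y mod m \<noteq> 0 \<Longrightarrow> (y@[c])!(length y - 1) = last y"
    by (cases "y = []") (auto simp: nth_append last_conv_nth)
  moreover have "(\<Prod>k<length y. if k mod m = 0 then \<pi> ((y@[c])!k) else P ((y@[c])!(k-1)) ((y@[c])!k))
     = (\<Prod>k<length y. if k mod m = 0 then \<pi> (y!k) else P (y!(k-1)) (y!k))"
    by (intro prod.cong) (auto simp: nth_append)
  ultimately show ?thesis unfolding cpm_def by auto
qed

lemma nth_last_len: "length x = Suc k \<Longrightarrow> x!k = last x"
  by (metis diff_Suc_1 last_conv_nth list.size(3) nat.simps(3))

lemma sum_fac3: "(\<Sum>c\<in>A. a * K c * b) = a * b * (\<Sum>c\<in>A. K c)" for a b :: real
  by (simp add: sum_distrib_left mult_ac)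

lemma cpm_nil[simp]: "cpm P \<pi> m [] = 1" by (simp add: cpm_def)

context
  fixes P :: "'a::finite \<Rightarrow> 'a \<Rightarrow> real" and \<pi> :: "'a \<Rightarrow> real"
  assumes mk: "markov_kernel P" and st: "stationary P \<pi>"
begin

lemma rowsum: "(\<Sum>c\<in>UNIV. P a c) = 1" using mk by (simp add: markov_kernel_def)
lemma pisum: "(\<Sum>c\<in>UNIV. \<pi> c) = 1" using st by (simp add: stationary_def)
lemma pistat: "(\<Sum>a\<in>UNIV. \<pi> a * P a c) = \<pi> c" using st by (simp add: stationary_def)

lemma ksum: "(\<Sum>c\<in>UNIV. if B then \<pi> c else P a c) = 1"
  by (cases B) (simp_all add: rowsum pisum)

lemma cpm_last:
  "(\<Sum>y\<in>{y. length y = Suc k}. cpm P \<pi> m y * f (last y)) = (\<Sum>a\<in>UNIV. \<pi> a * f a)"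
proof (induction k arbitrary: f)
  case 0
  show ?case by (subst sum_len_Cons) (simp add: cpm_def)
next
  case (Suc k)
  have one: "(\<Sum>y\<in>{y. length y = Suc k}. cpm P \<pi> m y) = 1"
    using Suc[of "\<lambda>_. 1"] pisum by simp
  have "(\<Sum>y\<in>{y. length y = Suc (Suc k)}. cpm P \<pi> m y * f (last y)) =
     (\<Sum>y\<in>{y. length y = Suc k}. \<Sum>c\<in>UNIV. cpm P \<pi> m y *
        (if Suc k mod m = 0 then \<pi> c else P (last y) c) * f c)"
    by (subst sum_len_Suc) (simp add: cpm_snoc)
  also have "\<dots> = (\<Sum>a\<in>UNIV. \<pi> a * f a)"
  proof (cases "Suc k mod m = 0")
    case True
    then show ?thesis
      by (simp add: mult.assoc sum_distrib_left[symmetric] sum_distrib_right[symmetric] one)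
  next
    case False
    then have "(\<Sum>y\<in>{y. length y = Suc k}. \<Sum>c\<in>UNIV. cpm P \<pi> m y *
        (if Suc k mod m = 0 then \<pi> c else P (last y) c) * f c) =
        (\<Sum>y\<in>{y. length y = Suc k}. cpm P \<pi> m y * (\<lambda>a. \<Sum>c\<in>UNIV. P a c * f c) (last y))"
      by (simp add: mult.assoc sum_distrib_left)
    also have "\<dots> = (\<Sum>a\<in>UNIV. \<pi> a * (\<Sum>c\<in>UNIV. P a c * f c))" by (rule Suc)
    also have "\<dots> = (\<Sum>c\<in>UNIV. (\<Sum>a\<in>UNIV. \<pi> a * P a c) * f c)"
      by (simp add: sum_distrib_left sum_distrib_right mult.assoc) (rule sum.swap)
    also have "\<dots> = (\<Sum>a\<in>UNIV. \<pi> a * f a)" by (simp add: pistat)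
    finally show ?thesis .
  qed
  finally show ?case .
qed

lemma cpm_sum1: "(\<Sum>y\<in>{y. length y = n}. cpm P \<pi> m y) = 1"
proof (cases n)
  case 0 then show ?thesis by simp
next
  case (Suc k) then show ?thesis using cpm_last[where k=k and m=m and f="\<lambda>_. 1"] pisum by simp
qed

lemma cpm_take:
  assumes "n \<le> N"
  shows "(\<Sum>y\<in>{y. length y = N}. cpm P \<pi> m y * h (take n y)) =
         (\<Sum>y\<in>{y. length y = n}. cpm P \<pi> m y * h y)"
  using assms
proof (induction N)
  case 0 then show ?case by simp
next
  case (Suc N)
  show ?case
  proof (cases "n = Suc N")
    case True then show ?thesis by (intro sum.cong) auto
  next
    case False
    then have le: "n \<le> N" using Suc by simp
    have "(\<Sum>y\<in>{y. length y = Suc N}. cpm P \<pi> m y * h (take n y)) =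
      (\<Sum>y\<in>{y. length y = N}. \<Sum>c\<in>UNIV. cpm P \<pi> m y *
        (if N mod m = 0 then \<pi> c else P (last y) c) * h (take n y))"
      by (subst sum_len_Suc) (intro sum.cong refl, simp add: cpm_snoc le)
    also have "\<dots> = (\<Sum>y\<in>{y. length y = N}. cpm P \<pi> m y * h (take n y))"
      by (intro sum.cong refl) (simp add: sum_fac3 ksum)
    also have "\<dots> = (\<Sum>y\<in>{y. length y = n}. cpm P \<pi> m y * h y)" using Suc.IH le by simp
    finally show ?thesis .
  qed
qed

lemma cpm_pair:
  assumes "Suc k < N"
  shows "(\<Sum>y\<in>{y. length y = N}. cpm P \<pi> m y * g (y!k) (y!Suc k)) =
    (\<Sum>a\<in>UNIV. \<Sum>c\<in>UNIV. \<pi> a * (if Suc k mod m = 0 then \<pi> c else P a c) * g a c)"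
proof -
  have "(\<Sum>y\<in>{y. length y = N}. cpm P \<pi> m y * g (y!k) (y!Suc k)) =
        (\<Sum>y\<in>{y. length y = N}. cpm P \<pi> m y * (\<lambda>z. g (z!k) (z!Suc k)) (take (Suc (Suc k)) y))"
    by simp
  also have "\<dots> = (\<Sum>y\<in>{y. length y = Suc (Suc k)}. cpm P \<pi> m y * g (y!k) (y!Suc k))"
    using assms by (subst cpm_take) auto
  also have "\<dots> = (\<Sum>y\<in>{y. length y = Suc k}. \<Sum>c\<in>UNIV. cpm P \<pi> m y *
        (if Suc k mod m = 0 then \<pi> c else P (last y) c) * g (last y) c)"
    by (subst sum_len_Suc) (intro sum.cong refl, auto simp: cpm_snoc nth_append nth_last_len)
  also have "\<dots> = (\<Sum>y\<in>{y. length y = Suc k}. cpm P \<pi> m y * (\<lambda>a. \<Sum>c\<in>UNIV.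
        (if Suc k mod m = 0 then \<pi> c else P a c) * g a c) (last y))"
    by (simp add: sum_distrib_left mult.assoc)
  also have "\<dots> = (\<Sum>a\<in>UNIV. \<pi> a * (\<Sum>c\<in>UNIV. (if Suc k mod m = 0 then \<pi> c else P a c) * g a c))"
    by (rule cpm_last)
  finally show ?thesis by (simp add: sum_distrib_left mult.assoc)
qed

end


definition chainY :: "nat \<Rightarrow> (nat \<Rightarrow> nat \<Rightarrow> 'a) \<Rightarrow> nat \<Rightarrow> nat \<Rightarrow> 'a" where
  "chainY s X j i = (if s = 1 then X i j else X j i)"

lemma grid_dm: "i < m \<Longrightarrow> (j*m+i) div m = j \<and> (j*m+i) mod (m::nat) = i"
  by simp

lemma concat_grid:
  assumes "0 < m"
  shows "concat (map (\<lambda>j. map (\<lambda>i. f j i) [0..<m]) [0..<n]) = map (\<lambda>k. f (k div m) (k mod m)) [0..<n*m]"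
proof (induction n)
  case 0 then show ?case by simp
next
  case (Suc n)
  have e1: "[0..<Suc n * m] = [0..<n*m] @ [n*m..<n*m+m]"
    using upt_add_eq_append[of 0 "n*m" m] by (simp add: add.commute)
  have e2: "map (\<lambda>k. f (k div m) (k mod m)) [n*m..<n*m+m] = map (\<lambda>i. f n i) [0..<m]"
  proof (rule nth_equalityI)
    show "length (map (\<lambda>k. f (k div m) (k mod m)) [n*m..<n*m+m]) = length (map (f n) [0..<m])" by simp
  next
    fix i assume "i < length (map (\<lambda>k. f (k div m) (k mod m)) [n*m..<n*m+m])"
    then have i: "i < m" by simp
    have "map (\<lambda>k. f (k div m) (k mod m)) [n*m..<n*m+m] ! i = f ((n*m+i) div m) ((n*m+i) mod m)"
      using i by (simp only: nth_map length_upt nth_upt) simp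
    also have "\<dots> = f n i" using grid_dm[OF i, of n] by simp
    finally show "map (\<lambda>k. f (k div m) (k mod m)) [n*m..<n*m+m] ! i = map (f n) [0..<m] ! i"
      using i by simp
  qed
  have "concat (map (\<lambda>j. map (\<lambda>i. f j i) [0..<m]) [0..<Suc n]) =
     concat (map (\<lambda>j. map (\<lambda>i. f j i) [0..<m]) [0..<n]) @ map (\<lambda>i. f n i) [0..<m]"
    by simp
  also have "\<dots> = map (\<lambda>k. f (k div m) (k mod m)) [0..<Suc n * m]"
    unfolding e1 map_append e2 Suc.IH ..
  finally show ?case .
qed

lemma read_array_map:
  assumes "0 < m" and "s \<in> {1,2}"
  shows "read_array s m X = map (\<lambda>k. chainY s X (k div m) (k mod m)) [0..<m*m]"
  using assms concat_grid[OF assms(1), where n=m]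
  unfolding read_array_def chainY_def by (cases "s = 1") simp_all

lemma array_prob_Y:
  assumes "s \<in> {1,2}"
  shows "array_prob s P \<pi> m X = (\<Prod>j<m. \<pi> (chainY s X j 0) * (\<Prod>i<m - 1. P (chainY s X j i) (chainY s X j (Suc i))))"
  using assms by (auto simp: array_prob_def chainY_def)

lemma cpm_grid:
  assumes "0 < m"
  shows "cpm P \<pi> m (map (\<lambda>k. Y (k div m) (k mod m)) [0..<m*m]) =
         (\<Prod>j<m. \<pi> (Y j 0) * (\<Prod>i<m - 1. P (Y j i) (Y j (Suc i))))"
proof -
  define e where "e k = (if k mod m = 0 then \<pi> (Y (k div m) (k mod m))
      else P (Y ((k-1) div m) ((k-1) mod m)) (Y (k div m) (k mod m)))" for k
  have "cpm P \<pi> m (map (\<lambda>k. Y (k div m) (k mod m)) [0..<m*m]) = (\<Prod>k<m*m. e k)"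
    unfolding cpm_def e_def by (intro prod.cong) auto
  also have "\<dots> = (\<Prod>j<m. \<Prod>k\<in>{j*m..<j*m+m}. e k)"
    by (rule prod.nat_group[symmetric])
  also have "\<dots> = (\<Prod>j<m. \<pi> (Y j 0) * (\<Prod>i<m - 1. P (Y j i) (Y j (Suc i))))"
  proof (rule prod.cong[OF refl])
    fix j assume "j \<in> {..<m}"
    have "(\<Prod>k\<in>{j*m..<j*m+m}. e k) = (\<Prod>k\<in>{0+j*m..<m+j*m}. e k)" by (simp add: add.commute)
    also have "\<dots> = (\<Prod>i\<in>{0..<m}. e (i+j*m))" by (rule prod.shift_bounds_nat_ivl)
    finally have "(\<Prod>k\<in>{j*m..<j*m+m}. e k) = (\<Prod>i<m. e (j*m+i))"
      by (simp add: atLeast0LessThan add.commute)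
    also have "\<dots> = (\<Prod>i<Suc (m-1). e (j*m+i))" using assms by simp
    also have "\<dots> = e (j*m) * (\<Prod>i<m-1. e (j*m + Suc i))"
      by (subst prod.lessThan_Suc_shift) simp
    also have "e (j*m) = \<pi> (Y j 0)" using assms by (simp add: e_def)
    also have "(\<Prod>i<m-1. e (j*m + Suc i)) = (\<Prod>i<m - 1. P (Y j i) (Y j (Suc i)))"
    proof (rule prod.cong[OF refl])
      fix i assume "i \<in> {..<m-1}"
      then have i: "Suc i < m" by auto
      have i2: "i < m" using i by simp
      have a: "(j*m + Suc i) div m = j \<and> (j*m + Suc i) mod m = Suc i" by (rule grid_dm[OF i])
      have b: "(j*m + Suc i - 1) = j*m + i" by simp
      have c: "(j*m + i) div m = j \<and> (j*m + i) mod m = i" by (rule grid_dm[OF i2])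
      show "e (j*m + Suc i) = P (Y j i) (Y j (Suc i))"
        unfolding e_def using a c by (simp only: b) simp
    qed
    finally show "(\<Prod>k\<in>{j*m..<j*m+m}. e k) = \<pi> (Y j 0) * (\<Prod>i<m - 1. P (Y j i) (Y j (Suc i)))" .
  qed
  finally show ?thesis .
qed

lemma array_prob_cpm:
  assumes "0 < m" and "s \<in> {1,2}"
  shows "array_prob s P \<pi> m X = cpm P \<pi> m (read_array s m X)"
  using assms by (simp add: read_array_map array_prob_Y cpm_grid)

lemma grid_lt: "i < m \<Longrightarrow> j < m \<Longrightarrow> j*m+i < m*(m::nat)"
proof -
  assume "i < m" "j < m"
  then have "j*m + i < Suc j * m" by simp
  also have "\<dots> \<le> m*m" using \<open>j < m\<close> by (intro mult_le_mono1) simp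
  finally show ?thesis .
qed

lemma read_bij:
  assumes "0 < m" and "s \<in> {1,2}"
  shows "bij_betw (read_array s m) (arrays m) {y. length y = m*m}"
proof (rule bij_betwI')
  fix X Z :: "nat \<Rightarrow> nat \<Rightarrow> 'a" assume X: "X \<in> arrays m" and Z: "Z \<in> arrays m"
  show "(read_array s m X = read_array s m Z) = (X = Z)"
  proof
    assume eq: "read_array s m X = read_array s m Z"
    show "X = Z"
    proof (intro ext)
      fix i j
      show "X i j = Z i j"
      proof (cases "i < m \<and> j < m")
        case True
        from eq have all: "\<forall>k<m*m. chainY s X (k div m) (k mod m) = chainY s Z (k div m) (k mod m)"
          using assms by (simp add: read_array_map list_eq_iff_nth_eq)
        have "chainY s X j i = chainY s Z j i"
          using all[rule_format, OF grid_lt[of i m j]] True by (simp add: grid_dm)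
        moreover have "chainY s X i j = chainY s Z i j"
          using all[rule_format, OF grid_lt[of j m i]] True by (simp add: grid_dm)
        ultimately have "chainY s X j i = chainY s Z j i" "chainY s X i j = chainY s Z i j" by auto
        then show ?thesis using assms unfolding chainY_def by (cases "s = 1") simp_all
      next
        case False
        then show ?thesis using X Z by (simp add: arrays_def)
      qed
    qed
  qed simp
next
  fix X assume "X \<in> arrays m"
  then show "read_array s m X \<in> {y. length y = m*m}"
    using assms by (simp add: read_array_map)
next
  fix y :: "'a list" assume y: "y \<in> {y. length y = m*m}"
  define X where "X i j = (if i < m \<and> j < m then y ! (if s = 1 then j*m+i else i*m+j) else undefined)" for i j
  have "X \<in> arrays m" by (simp add: arrays_def X_def)
  moreover have "read_array s m X = y"
  proof -
    have "\<forall>k<m*m. chainY s X (k div m) (k mod m) = y ! k"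
    proof (intro allI impI)
      fix k assume k: "k < m*m"
      then have "k div m < m" "k mod m < m" using assms
        by (auto simp: less_mult_imp_div_less)
      then show "chainY s X (k div m) (k mod m) = y ! k"
        by (simp add: chainY_def X_def)
    qed
    then show ?thesis using assms y by (simp add: read_array_map list_eq_iff_nth_eq)
  qed
  ultimately show "\<exists>X\<in>arrays m. y = read_array s m X" by metis
qed


fun wt :: "('a \<Rightarrow> 'a \<Rightarrow> real) \<Rightarrow> 'a list \<Rightarrow> real" where
  "wt P (x # y # r) = P x y * wt P (y # r)"
| "wt P _ = 1"

fun Fc :: "('a \<Rightarrow> 'a \<Rightarrow> real) \<Rightarrow> 'a list \<Rightarrow> real" where
  "Fc P (x # y # r) = - ln (P x y) + Fc P (y # r)"
| "Fc P _ = 0"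

definition Leaves :: "('a \<Rightarrow> 'a \<Rightarrow> real) \<Rightarrow> real \<Rightarrow> 'a list set" where
  "Leaves P \<tau> = {t. 2 \<le> length t \<and> \<tau> \<le> wt P (butlast t) \<and> wt P t < \<tau>}"

lemma wt_snoc: "y \<noteq> [] \<Longrightarrow> wt P (y @ [c]) = wt P y * P (last y) c"
  by (induction y rule: induct_list012) auto

lemma wt_append: "xs \<noteq> [] \<Longrightarrow> wt P (xs @ ys) = wt P xs * wt P (last xs # ys)"
  by (induction P xs rule: wt.induct) auto

lemma Fc_sum: "Fc P y = (\<Sum>k<length y - 1. - ln (P (y!k) (y!Suc k)))"
proof (induction P y rule: Fc.induct)
  case (1 P x y r)
  have "length (x # y # r) - 1 = Suc (length (y # r) - 1)" by simp
  then show ?case using 1 by (simp only: sum.lessThan_Suc_shift Fc.simps) simp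
qed auto

lemma Fc_append_ge:
  assumes "\<And>a b. 0 < P a b" "\<And>a b. P a b \<le> 1"
  shows "Fc P xs + Fc P ys \<le> Fc P (xs @ ys)"
proof (induction xs rule: induct_list012)
  case (2 x)
  have "0 \<le> - ln (P x (hd ys))" using assms by simp
  then show ?case by (cases ys) auto
qed auto

context
  fixes P :: "'a::finite \<Rightarrow> 'a \<Rightarrow> real"
  assumes mk: "markov_kernel P" and pos: "min_trans P > 0"
begin

lemma Pmin: "min_trans P \<le> P a b"
proof -
  have "{P a a' |a a'. True} = (\<lambda>(a,a'). P a a') ` UNIV" by auto
  then have "finite {P a a' |a a'. True}" by simp
  then show ?thesis unfolding min_trans_def by (rule Min_le) auto
qed

lemma Ppos: "0 < P a b" using Pmin[of a b] pos by linarith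

lemma Ple1: "P a b \<le> 1"
proof -
  have "P a b \<le> (\<Sum>c\<in>UNIV. P a c)"
    using mk by (intro member_le_sum) (auto simp: markov_kernel_def)
  then show ?thesis using mk by (simp add: markov_kernel_def)
qed

lemma wt_pos: "0 < wt P y"
proof (induction y rule: induct_list012)
  case (3 x y zs)
  then show ?case using Ppos[of x y] by simp
qed auto

lemma wt_le1: "wt P y \<le> 1"
proof (induction y rule: induct_list012)
  case (3 x y zs)
  then show ?case using Ple1[of x y] Ppos[of x y] wt_pos[of "y#zs"] by (simp add: mult_le_one)
qed auto

lemma Fc_wt: "Fc P y = - ln (wt P y)"
proof (induction y rule: induct_list012)
  case (3 x y zs)
  then show ?case using Ppos[of x y] wt_pos[of "y#zs"] by (simp add: ln_mult)
qed auto

lemma Fc_nonneg: "0 \<le> Fc P y"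
  using wt_le1 wt_pos by (simp add: Fc_wt)

lemma wt_ext: "t \<noteq> [] \<Longrightarrow> (\<Sum>u\<in>{u. length u = n}. wt P (t @ u)) = wt P t"
proof (induction n)
  case 0 then show ?case by simp
next
  case (Suc n)
  have "(\<Sum>u\<in>{u. length u = Suc n}. wt P (t @ u)) =
        (\<Sum>u\<in>{u. length u = n}. \<Sum>c\<in>UNIV. wt P (t @ u) * P (last (t @ u)) c)"
    using Suc.prems by (subst sum_len_Suc) (simp add: wt_snoc[symmetric])
  also have "\<dots> = (\<Sum>u\<in>{u. length u = n}. wt P (t @ u))"
    using mk by (simp add: sum_distrib_left[symmetric] markov_kernel_def)
  finally show ?case using Suc by simp
qed

lemma wt_total: "(\<Sum>s\<in>{s. length s = Suc n}. wt P s) = real CARD('a)"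
  by (subst sum_len_Cons) (simp add: wt_ext[of "[_]", simplified])

lemma kraft:
  assumes fin: "finite S" and ne: "\<And>t. t \<in> S \<Longrightarrow> t \<noteq> []"
    and len: "\<And>t. t \<in> S \<Longrightarrow> length t \<le> Suc M"
    and pf: "\<And>t v. t \<in> S \<Longrightarrow> t @ v \<in> S \<Longrightarrow> v = []"
  shows "(\<Sum>t\<in>S. wt P t) \<le> real CARD('a)"
proof -
  define E where "E t = (\<lambda>u. t @ u) ` {u. length u = Suc M - length t}" for t :: "'a list"
  have finE: "finite (E t)" for t unfolding E_def by (simp add: finite_len)
  have sE: "(\<Sum>s\<in>E t. wt P s) = wt P t" if "t \<in> S" for t
    unfolding E_def using ne[OF that]
    by (subst sum.reindex) (auto simp: inj_on_def wt_ext)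
  have disj: "E t \<inter> E t' = {}" if "t \<in> S" "t' \<in> S" "t \<noteq> t'" for t t'
  proof (rule ccontr)
    assume "E t \<inter> E t' \<noteq> {}"
    then obtain u u' where "t @ u = t' @ u'" "length u = Suc M - length t" "length u' = Suc M - length t'"
      unfolding E_def by blast
    then obtain v where "t' = t @ v \<or> t = t' @ v" by (metis append_eq_append_conv2)
    then show False using pf that by auto
  qed
  have "(\<Sum>t\<in>S. wt P t) = (\<Sum>t\<in>S. \<Sum>s\<in>E t. wt P s)" using sE by simp
  also have "\<dots> = (\<Sum>s\<in>(\<Union>t\<in>S. E t). wt P s)"
    using disj fin finE by (subst sum.UNION_disjoint) auto
  also have "\<dots> \<le> (\<Sum>s\<in>{s. length s = Suc M}. wt P s)"
  proof (rule sum_mono2)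
    show "finite {s::'a list. length s = Suc M}" by (rule finite_len)
    show "(\<Union>t\<in>S. E t) \<subseteq> {s. length s = Suc M}"
      unfolding E_def using len by auto
  qed (simp add: less_imp_le[OF wt_pos])
  also have "\<dots> = real CARD('a)" by (rule wt_total)
  finally show ?thesis .
qed

end


definition cutk :: "('a \<Rightarrow> 'a \<Rightarrow> real) \<Rightarrow> real \<Rightarrow> 'a list \<Rightarrow> nat" where
  "cutk P \<tau> y = (LEAST k. 0 < k \<and> wt P (take k y) < \<tau>)"

fun prs :: "('a \<Rightarrow> 'a \<Rightarrow> real) \<Rightarrow> real \<Rightarrow> nat \<Rightarrow> 'a list \<Rightarrow> 'a list list" where
  "prs P \<tau> 0 y = map (\<lambda>x. [x]) y"
| "prs P \<tau> (Suc n) y = (if \<exists>k. 0 < k \<and> k \<le> length y \<and> wt P (take k y) < \<tau>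
     then take (cutk P \<tau> y) y # prs P \<tau> n (drop (cutk P \<tau> y) y) else map (\<lambda>x. [x]) y)"

lemma prs_concat: "concat (prs P \<tau> n y) = y"
proof (induction n arbitrary: y)
  case 0 then show ?case by (induction y) auto
next
  case (Suc n) then show ?case by simp
qed

context
  fixes P :: "'a::finite \<Rightarrow> 'a \<Rightarrow> real" and \<tau> :: real
  assumes mk: "markov_kernel P" and pos: "min_trans P > 0"
    and tau: "0 < \<tau>" "\<tau> \<le> 1"
begin

lemma wt_short: "length y \<le> 1 \<Longrightarrow> wt P y = 1"
  by (cases y) auto

lemma leaf_pf: "t \<in> Leaves P \<tau> \<Longrightarrow> t @ v \<in> Leaves P \<tau> \<Longrightarrow> v = []"
proof (rule ccontr)
  assume t: "t \<in> Leaves P \<tau>" and tv: "t @ v \<in> Leaves P \<tau>" and v: "v \<noteq> []"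
  have tne: "t \<noteq> []" using t by (auto simp: Leaves_def)
  have "wt P (butlast (t @ v)) = wt P (t @ butlast v)" using v by (simp add: butlast_append)
  also have "\<dots> = wt P t * wt P (last t # butlast v)" using tne by (rule wt_append)
  also have "\<dots> \<le> wt P t"
    using wt_le1[OF mk pos] wt_pos[OF mk pos] by (simp add: mult_left_le less_imp_le)
  also have "\<dots> < \<tau>" using t by (simp add: Leaves_def)
  finally show False using tv by (simp add: Leaves_def)
qed

lemma leaf_lb: "t \<in> Leaves P \<tau> \<Longrightarrow> \<tau> * min_trans P \<le> wt P t"
proof -
  assume t: "t \<in> Leaves P \<tau>"
  then have "1 \<le> length (butlast t)" unfolding Leaves_def by auto
  then have ne: "butlast t \<noteq> []" by (metis le_zero_eq list.size(3) one_neq_zero)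
  have "t = butlast t @ [last t]" using ne by (metis append_butlast_last_id butlast.simps(1))
  then have "wt P t = wt P (butlast t) * P (last (butlast t)) (last t)"
    using wt_snoc[OF ne] by metis
  moreover have "\<tau> \<le> wt P (butlast t)" using t by (simp add: Leaves_def)
  moreover note Pmin[OF mk pos, of "last (butlast t)" "last t"]
  ultimately show ?thesis using tau pos by (simp add: mult_mono)
qed

lemma card1_P: "CARD('a) = 1 \<Longrightarrow> P a b = 1"
proof -
  assume c: "CARD('a) = 1"
  then have u: "UNIV = {a}" by (metis card_1_singletonE singletonD UNIV_I)
  have "(\<Sum>c\<in>UNIV. P a c) = 1" using mk by (simp add: markov_kernel_def)
  then have "(\<Sum>c\<in>{a}. P a c) = 1" using u by metis
  then have "P a a = 1" by simp
  moreover have "b = a" using u by auto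
  ultimately show ?thesis by simp
qed

lemma card1_wt: "CARD('a) = 1 \<Longrightarrow> wt P y = 1"
  by (induction y rule: induct_list012) (auto simp: card1_P)

lemma card2_P: "2 \<le> CARD('a) \<Longrightarrow> P a b \<le> 1 - min_trans P"
proof -
  assume c: "2 \<le> CARD('a)"
  have "\<not> (\<forall>c::'a. c = b)"
  proof
    assume "\<forall>c::'a. c = b"
    then have "(UNIV::'a set) = {b}" by auto
    then have "card (UNIV::'a set) = card {b}" by (simp only:)
    then show False using c by simp
  qed
  then obtain c where cb: "c \<noteq> b" by blast
  have "P a b + P a c = (\<Sum>d\<in>{b,c}. P a d)" using cb by simp
  also have "\<dots> \<le> (\<Sum>d\<in>UNIV. P a d)"
    using mk by (intro sum_mono2) (auto simp: markov_kernel_def)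
  also have "\<dots> = 1" using mk by (simp add: markov_kernel_def)
  finally show ?thesis using Pmin[OF mk pos, of a c] by linarith
qed

lemma wt_geom: "2 \<le> CARD('a) \<Longrightarrow> wt P y \<le> (1 - min_trans P) ^ (length y - 1)"
proof (induction y rule: induct_list012)
  case (3 x y zs)
  have "wt P (x # y # zs) = P x y * wt P (y # zs)" by simp
  also have "\<dots> \<le> (1 - min_trans P) * (1 - min_trans P) ^ (length (y # zs) - 1)"
    using 3 card2_P wt_pos[OF mk pos] Ppos[OF mk pos] Pmin[OF mk pos, of x y] Ple1[OF mk pos, of x y]
    by (intro mult_mono) (auto simp: less_imp_le)
  finally show ?case by simp
qed auto

lemma len_bound: "2 \<le> CARD('a) \<Longrightarrow> \<exists>L. \<forall>y. \<tau> \<le> wt P y \<longrightarrow> length y \<le> L"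
proof -
  assume c2: "2 \<le> CARD('a)"
  define d where "d = min_trans P"
  obtain a0 :: 'a where True by simp
  have d01: "0 < d" "d \<le> 1" using pos Pmin[OF mk pos, of a0 a0] Ple1[OF mk pos, of a0 a0] unfolding d_def
    by auto
  obtain L where L: "(1 - d) ^ L < \<tau>" using real_arch_pow_inv[OF tau(1), of "1 - d"] d01 by auto
  have "length y \<le> L" if "\<tau> \<le> wt P y" for y
  proof (rule ccontr)
    assume "\<not> length y \<le> L"
    then have "L \<le> length y - 1" by simp
    then have "(1 - d) ^ (length y - 1) \<le> (1 - d) ^ L" using d01 by (intro power_decreasing) auto
    then have "wt P y < \<tau>" using wt_geom[OF c2, of y] L unfolding d_def by linarith
    then show False using that by simp
  qed
  then show ?thesis by blast
qed

lemma leaves_fin: "\<exists>M. finite (Leaves P \<tau>) \<and> (\<forall>t\<in>Leaves P \<tau>. length t \<le> Suc M)"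
proof (cases "CARD('a) = 1")
  case True
  then have "Leaves P \<tau> = {}" using card1_wt tau by (auto simp: Leaves_def)
  then show ?thesis by simp
next
  case False
  then have "2 \<le> CARD('a)" proof -
    have "0 < CARD('a)" by (rule finite_UNIV_card_ge_0) simp
    then show ?thesis using False by linarith
  qed
  then obtain L where L: "\<forall>y. \<tau> \<le> wt P y \<longrightarrow> length y \<le> L" using len_bound by blast
  have len: "\<forall>t\<in>Leaves P \<tau>. length t \<le> Suc L"
    using L by (auto simp: Leaves_def)
  have "Leaves P \<tau> \<subseteq> {xs. set xs \<subseteq> UNIV \<and> length xs \<le> Suc L}" using len by auto
  then have "finite (Leaves P \<tau>)" by (rule finite_subset) (rule finite_lists_length_le, simp)
  then show ?thesis using len by blast
qed

lemma leaves_sum: "(\<Sum>t\<in>Leaves P \<tau>. wt P t) \<le> real CARD('a)"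
proof -
  obtain M where M: "finite (Leaves P \<tau>)" "\<forall>t\<in>Leaves P \<tau>. length t \<le> Suc M"
    using leaves_fin by blast
  show ?thesis
  proof (rule kraft[OF mk pos M(1)])
    show "t \<noteq> []" if "t \<in> Leaves P \<tau>" for t using that by (auto simp: Leaves_def)
    show "length t \<le> Suc M" if "t \<in> Leaves P \<tau>" for t using that M(2) by auto
    show "v = []" if "t \<in> Leaves P \<tau>" "t @ v \<in> Leaves P \<tau>" for t v using leaf_pf that by blast
  qed
qed

lemma leaves_card: "real (card (Leaves P \<tau>)) * (\<tau> * min_trans P) \<le> real CARD('a)"
proof -
  have "real (card (Leaves P \<tau>)) * (\<tau> * min_trans P) = (\<Sum>t\<in>Leaves P \<tau>. \<tau> * min_trans P)" by simp
  also have "\<dots> \<le> (\<Sum>t\<in>Leaves P \<tau>. wt P t)" by (intro sum_mono leaf_lb)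
  also have "\<dots> \<le> real CARD('a)" by (rule leaves_sum)
  finally show ?thesis .
qed

lemma cut_props:
  assumes ex: "\<exists>k. 0 < k \<and> k \<le> length y \<and> wt P (take k y) < \<tau>"
  shows "0 < cutk P \<tau> y" "cutk P \<tau> y \<le> length y" "take (cutk P \<tau> y) y \<in> Leaves P \<tau>"
proof -
  obtain k where k: "0 < k" "k \<le> length y" "wt P (take k y) < \<tau>" using ex by blast
  let ?c = "cutk P \<tau> y"
  have c: "0 < ?c \<and> wt P (take ?c y) < \<tau>" unfolding cutk_def
    by (rule LeastI_ex) (use k in blast)
  have ck: "?c \<le> k" unfolding cutk_def by (rule Least_le) (use k in blast)
  show "0 < ?c" using c by simp
  show cl: "?c \<le> length y" using ck k by simp
  have c2: "2 \<le> ?c"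
  proof (rule ccontr)
    assume "\<not> 2 \<le> ?c"
    then have "length (take ?c y) \<le> 1" by simp
    then have "wt P (take ?c y) = 1" by (rule wt_short)
    then show False using c tau by simp
  qed
  have nl: "\<not> (0 < ?c - 1 \<and> wt P (take (?c - 1) y) < \<tau>)"
    unfolding cutk_def by (rule not_less_Least) (use c2 in \<open>simp add: cutk_def\<close>)
  have "\<tau> \<le> wt P (take (?c - 1) y)" using nl c2 by auto
  then show "take ?c y \<in> Leaves P \<tau>" using c c2 cl by (simp add: Leaves_def butlast_take)
qed

lemma prs_set: "set (prs P \<tau> n y) \<subseteq> Leaves P \<tau> \<union> range (\<lambda>x. [x])"
proof (induction n arbitrary: y)
  case (Suc n) then show ?case using cut_props(3) by auto
qed auto

lemma prs_cost:
  assumes g: "0 \<le> \<gamma>"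
    and ql: "\<And>t. t \<in> Leaves P \<tau> \<Longrightarrow> qc t \<le> (1 + \<gamma>) * Fc P t"
    and qs: "\<And>x. qc [x] = cs"
    and rem: "\<And>y. \<tau> \<le> wt P y \<Longrightarrow> real (length y) * cs \<le> Lr * cs"
    and ln: "length y \<le> n"
  shows "sum_list (map qc (prs P \<tau> n y)) \<le> (1 + \<gamma>) * Fc P y + Lr * cs"
  using ln
proof (induction n arbitrary: y)
  case 0
  then have "y = []" by simp
  moreover have "0 \<le> Lr * cs" using rem[of "[]"] tau by simp
  ultimately show ?case by simp
next
  case (Suc n)
  show ?case
  proof (cases "\<exists>k. 0 < k \<and> k \<le> length y \<and> wt P (take k y) < \<tau>")
    case True
    let ?c = "cutk P \<tau> y"
    note cp = cut_props[OF True]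
    have IH: "sum_list (map qc (prs P \<tau> n (drop ?c y))) \<le> (1 + \<gamma>) * Fc P (drop ?c y) + Lr * cs"
      using Suc cp by (intro Suc.IH) auto
    have "Fc P (take ?c y) + Fc P (drop ?c y) \<le> Fc P y"
      using Fc_append_ge[of P "take ?c y" "drop ?c y"] Ppos[OF mk pos] Ple1[OF mk pos] by simp
    then have "(1 + \<gamma>) * Fc P (take ?c y) + (1 + \<gamma>) * Fc P (drop ?c y) \<le> (1 + \<gamma>) * Fc P y"
      using g by (simp add: distrib_left[symmetric] mult_left_mono)
    then show ?thesis using True IH ql[OF cp(3)] by simp
  next
    case False
    have "\<tau> \<le> wt P y"
    proof (cases "y = []")
      case True then show ?thesis using tau by simp
    next
      case ne: False
      then show ?thesis using False[simplified, rule_format, of "length y"] by auto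
    qed
    then have "real (length y) * cs \<le> Lr * cs" by (rule rem)
    moreover have "sum_list (map qc (map (\<lambda>x. [x]) y)) = real (length y) * cs"
      by (induction y) (auto simp: qs algebra_simps)
    moreover have "0 \<le> (1 + \<gamma>) * Fc P y" using g Fc_nonneg[OF mk pos] by simp
    ultimately show ?thesis using False by (simp only: prs.simps if_False)
  qed
qed

end


lemma card_bdry: "card {k\<in>{..<m*m - 1}. Suc k mod m = 0} \<le> m"
proof -
  have "{k\<in>{..<m*m - 1}. Suc k mod m = 0} \<subseteq> (\<lambda>j. Suc j * m - 1) ` {..<m}"
  proof
    fix k assume k: "k \<in> {k\<in>{..<m*m - 1}. Suc k mod m = 0}"
    then have m0: "0 < m" by (cases m) auto
    define q where "q = Suc k div m"
    have sk: "Suc k = q * m" using k by (simp add: q_def) (metis div_mult_mod_eq add_0_right)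
    have q0: "0 < q" using sk by (cases q) auto
    have "Suc k < m * m" using k by auto
    then have "q * m < m * m" using sk by simp
    then have "q < m" by (simp add: mult_less_cancel2)
    moreover have "k = Suc (q - 1) * m - 1" using sk q0 by simp
    ultimately show "k \<in> (\<lambda>j. Suc j * m - 1) ` {..<m}" by (intro image_eqI[where x="q - 1"]) auto
  qed
  then have "card {k\<in>{..<m*m - 1}. Suc k mod m = 0} \<le> card ((\<lambda>j. Suc j * m - 1) ` {..<m})"
    by (intro card_mono) auto
  also have "\<dots> \<le> m" using card_image_le[of "{..<m}" "\<lambda>j. Suc j * m - 1"] by simp
  finally show ?thesis .
qed

context
  fixes P :: "'a::finite \<Rightarrow> 'a \<Rightarrow> real" and \<pi> :: "'a \<Rightarrow> real"
  assumes mk: "markov_kernel P" and st: "stationary P \<pi>" and pos: "min_trans P > 0"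
begin

lemma pi_nonneg: "0 \<le> \<pi> a" using st by (simp add: stationary_def)

lemma negln_le: "- ln (P a c) \<le> - ln (min_trans P)"
  using Pmin[OF mk pos, of a c] pos by simp

lemma negln_ge: "0 \<le> - ln (P a c)"
  using Ple1[OF mk pos, of a c] Ppos[OF mk pos, of a c] by simp

lemma H_nonneg: "0 \<le> entropy_rate P \<pi>"
proof -
  have "0 \<le> (\<Sum>a\<in>UNIV. \<Sum>a'\<in>UNIV. \<pi> a * P a a' * (- ln (P a a')))"
    using pi_nonneg Ppos[OF mk pos] negln_ge by (intro sum_nonneg mult_nonneg_nonneg) (auto simp: less_imp_le)
  then show ?thesis by (simp add: entropy_rate_def sum_negf)
qed

lemma term_bound:
  "(\<Sum>a\<in>UNIV. \<Sum>c\<in>UNIV. \<pi> a * (if B then \<pi> c else P a c) * (- ln (P a c)))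
    \<le> entropy_rate P \<pi> + (if B then - ln (min_trans P) else 0)"
proof (cases B)
  case True
  have "(\<Sum>a\<in>UNIV. \<Sum>c\<in>UNIV. \<pi> a * \<pi> c * (- ln (P a c))) \<le>
        (\<Sum>a\<in>UNIV. \<Sum>c\<in>UNIV. \<pi> a * \<pi> c * (- ln (min_trans P)))"
    using pi_nonneg negln_le by (intro sum_mono mult_left_mono) (auto)
  also have "\<dots> = ((\<Sum>a\<in>UNIV. \<pi> a) * (\<Sum>c\<in>UNIV. \<pi> c)) * (- ln (min_trans P))"
    by (simp add: sum_distrib_right sum_distrib_left mult_ac)
  also have "\<dots> = - ln (min_trans P)" using pisum[OF mk st] by simp
  finally show ?thesis using True H_nonneg by simp
next
  case False
  have "(\<Sum>a\<in>UNIV. \<Sum>c\<in>UNIV. \<pi> a * P a c * (- ln (P a c))) = entropy_rate P \<pi>"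
    by (simp add: entropy_rate_def sum_negf)
  then show ?thesis using False by simp
qed

lemma expect_F:
  assumes m: "0 < m"
  shows "(\<Sum>y\<in>{y. length y = m*m}. cpm P \<pi> m y * Fc P y)
           \<le> real (m*m) * entropy_rate P \<pi> + real m * (- ln (min_trans P))"
proof -
  let ?N = "m*m" and ?H = "entropy_rate P \<pi>" and ?b = "- ln (min_trans P)"
  have b0: "0 \<le> ?b" using negln_ge negln_le by (meson order_trans)
  have "(\<Sum>y\<in>{y. length y = ?N}. cpm P \<pi> m y * Fc P y) =
        (\<Sum>y\<in>{y. length y = ?N}. \<Sum>k<?N - 1. cpm P \<pi> m y * (- ln (P (y!k) (y!Suc k))))"
    by (intro sum.cong refl) (simp add: Fc_sum sum_distrib_left)
  also have "\<dots> = (\<Sum>k<?N - 1. \<Sum>y\<in>{y. length y = ?N}. cpm P \<pi> m y * (- ln (P (y!k) (y!Suc k))))"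
    by (rule sum.swap)
  also have "\<dots> = (\<Sum>k<?N - 1. \<Sum>a\<in>UNIV. \<Sum>c\<in>UNIV. \<pi> a * (if Suc k mod m = 0 then \<pi> c else P a c) * (- ln (P a c)))"
    by (intro sum.cong refl cpm_pair[OF mk st]) auto
  also have "\<dots> \<le> (\<Sum>k<?N - 1. ?H + (if Suc k mod m = 0 then ?b else 0))"
    by (intro sum_mono term_bound)
  also have "\<dots> = real (?N - 1) * ?H + (\<Sum>k<?N - 1. if Suc k mod m = 0 then ?b else 0)"
    by (simp add: sum.distrib)
  also have "(\<Sum>k<?N - 1. if Suc k mod m = 0 then ?b else 0) = real (card {k\<in>{..<?N - 1}. Suc k mod m = 0}) * ?b"
    by (simp add: sum.inter_filter[symmetric])
  also have "\<dots> \<le> real m * ?b" using card_bdry[of m] b0 by (intro mult_right_mono) auto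
  also have "real (?N - 1) * ?H \<le> real ?N * ?H"
  proof -
    have "real (?N - 1) \<le> real ?N" by (rule of_nat_mono) simp
    then show ?thesis using H_nonneg by (intro mult_right_mono) auto
  qed
  finally show ?thesis by simp
qed

end


lemma prod_list_pos: "(\<forall>x\<in>set xs. 0 < (x::real)) \<Longrightarrow> 0 < prod_list xs"
  by (induction xs) auto

lemma ln_prod_list: fixes xs :: "real list" shows "(\<forall>x\<in>set xs. 0 < x) \<Longrightarrow> ln (prod_list xs) = sum_list (map ln xs)"
proof (induction xs)
  case (Cons x xs)
  have "0 < prod_list xs" using Cons.prems prod_list_pos[of xs] by auto
  then show ?case using Cons by (simp add: ln_mult)
qed simp

lemma len_concat_ge: "(\<forall>t\<in>set ts. t \<noteq> []) \<Longrightarrow> length ts \<le> length (concat ts)"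
proof (induction ts)
  case (Cons t ts)
  then have "1 \<le> length t" by (cases t) auto
  then show ?case using Cons by simp
qed simp

lemma sum_list_neg: "sum_list (map (\<lambda>x. - f x) xs) = - sum_list (map f xs :: real list)"
  by (induction xs) auto

lemma cpm_nonneg: "(\<And>a. 0 \<le> \<pi> a) \<Longrightarrow> (\<And>a b. 0 \<le> P a b) \<Longrightarrow> 0 \<le> cpm P \<pi> m y"
  unfolding cpm_def by (intro prod_nonneg) auto

lemma loss_bound:
  fixes P :: "'a::finite \<Rightarrow> 'a \<Rightarrow> real"
  assumes mk: "markov_kernel P" and st: "stationary P \<pi>" and pos: "min_trans P > 0"
    and s: "s \<in> {1,2}" and tau: "0 < \<tau>" "\<tau> < 1"
  shows "\<exists>K. \<forall>m>0. best_unigram_loss s P \<pi> (Leaves P \<tau> \<union> range (\<lambda>x. [x]))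
      (\<lambda>X. prs P \<tau> (m*m) (read_array s m X)) m
      \<le> ereal ((ln (real (m*m) + 1) + K +
         (1 + (ln (real CARD('a)) - ln (1 - 1/1000)) / (- ln \<tau>)) *
           (real (m*m) * entropy_rate P \<pi> + real m * (- ln (min_trans P)))) / real (m*m))"
proof -
  define C where "C = real CARD('a)"
  define \<eta> :: real where "\<eta> = 1/1000"
  define Sw where "Sw = (\<Sum>t\<in>Leaves P \<tau>. wt P t)"
  define r where "r = 1 - (1 - \<eta>) * Sw / C"
  define qt where "qt t = (if t \<in> Leaves P \<tau> then (1 - \<eta>) * wt P t / C else r / C)" for t
  define c where "c = ln C - ln (1 - \<eta>)"
  define T where "T = - ln \<tau>"
  define \<gamma> where "\<gamma> = c / T"
  define cs where "cs = - ln (r / C)"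
  define Dict where "Dict = Leaves P \<tau> \<union> range (\<lambda>x::'a. [x])"
  have tau1: "\<tau> \<le> 1" using tau by simp
  have C1: "1 \<le> C" unfolding C_def
    using finite_UNIV_card_ge_0[where 'a='a] by (simp add: Suc_le_eq)
  have Sw0: "0 \<le> Sw" unfolding Sw_def using wt_pos[OF mk pos] by (simp add: sum_nonneg less_imp_le)
  have SwC: "Sw \<le> C" unfolding Sw_def C_def by (rule leaves_sum[OF mk pos tau(1) tau1])
  have r_ge: "\<eta> \<le> r"
  proof -
    have "(1 - \<eta>) * Sw / C \<le> (1 - \<eta>)" using SwC C1 by (simp add: \<eta>_def divide_le_eq)
    then show ?thesis unfolding r_def by simp
  qed
  have r_le: "r \<le> 1" unfolding r_def using Sw0 C1 by (simp add: \<eta>_def)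
  have r_pos: "0 < r" using r_ge by (simp add: \<eta>_def)
  have cs0: "0 \<le> cs" unfolding cs_def using r_pos r_le C1 by simp
  have T0: "0 < T" unfolding T_def using tau by simp
  have c0: "0 \<le> c" unfolding c_def using C1 by (simp add: \<eta>_def)
  have qt_pos: "0 < qt t" for t
    unfolding qt_def using wt_pos[OF mk pos] r_pos C1 by (simp add: \<eta>_def)
  have qsum: "(\<Sum>t\<in>Dict. qt t) = 1"
  proof -
    obtain M where fin: "finite (Leaves P \<tau>)" using leaves_fin[OF mk pos tau(1) tau1] by blast
    have disj: "Leaves P \<tau> \<inter> range (\<lambda>x::'a. [x]) = {}" by (auto simp: Leaves_def)
    have "(\<Sum>t\<in>Dict. qt t) = (\<Sum>t\<in>Leaves P \<tau>. qt t) + (\<Sum>t\<in>range (\<lambda>x::'a. [x]). qt t)"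
      unfolding Dict_def using fin disj by (intro sum.union_disjoint) auto
    also have "(\<Sum>t\<in>Leaves P \<tau>. qt t) = (1 - \<eta>) * Sw / C"
      unfolding qt_def Sw_def by (simp add: sum_divide_distrib sum_distrib_left)
    also have "(\<Sum>t\<in>range (\<lambda>x::'a. [x]). qt t) = (\<Sum>x\<in>UNIV. qt [x])"
      by (subst sum.reindex) (auto simp: inj_on_def)
    also have "\<dots> = C * (r / C)" unfolding qt_def C_def by (simp add: Leaves_def)
    also have "(1 - \<eta>) * Sw / C + C * (r / C) = 1" using C1 unfolding r_def by simp
    finally show ?thesis .
  qed
  obtain Lr where rem: "\<And>y. \<tau> \<le> wt P y \<Longrightarrow> real (length y) * cs \<le> Lr * cs"
  proof (cases "CARD('a) = 1")
    case True
    then have "Leaves P \<tau> = {}" using card1_wt[OF mk pos tau(1) tau1] tau by (auto simp: Leaves_def)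
    then have "cs = 0" using True unfolding cs_def r_def Sw_def C_def by simp
    then show ?thesis using that[of 0] by simp
  next
    case False
    then have "2 \<le> CARD('a)"
    proof -
      have "0 < CARD('a)" by (rule finite_UNIV_card_ge_0) simp
      then show ?thesis using False by linarith
    qed
    then obtain L where "\<forall>y. \<tau> \<le> wt P y \<longrightarrow> length y \<le> L" using len_bound[OF mk pos tau(1) tau1] by blast
    then show ?thesis using cs0 that[of "real L"] by (simp add: mult_right_mono)
  qed
  have qc_leaf: "- ln (qt t) \<le> (1 + \<gamma>) * Fc P t" if t: "t \<in> Leaves P \<tau>" for t
  proof -
    have w: "0 < wt P t" "wt P t < \<tau>" using wt_pos[OF mk pos] t by (auto simp: Leaves_def)
    have "- ln (qt t) = Fc P t + c"
      using t w C1 unfolding qt_def c_def Fc_wt[OF mk pos]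
      by (simp add: \<eta>_def ln_mult ln_div)
    moreover have "T < Fc P t" unfolding T_def Fc_wt[OF mk pos] using w by simp
    then have "c * T \<le> c * Fc P t" using c0 by (intro mult_left_mono) auto
    then have "c \<le> \<gamma> * Fc P t" unfolding \<gamma>_def using T0
      by (simp add: le_divide_eq)
    ultimately show ?thesis by (simp add: algebra_simps)
  qed
  have qc_single: "- ln (qt [x]) = cs" for x unfolding qt_def cs_def by (auto simp: Leaves_def)
  have g0: "0 \<le> \<gamma>" unfolding \<gamma>_def using c0 T0 by simp
  define K where "K = Lr * cs"
  have "\<forall>m>0. best_unigram_loss s P \<pi> Dict (\<lambda>X. prs P \<tau> (m*m) (read_array s m X)) m
      \<le> ereal ((ln (real (m*m) + 1) + K + (1 + \<gamma>) *
           (real (m*m) * entropy_rate P \<pi> + real m * (- ln (min_trans P)))) / real (m*m))"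
  proof (intro allI impI)
    fix m :: nat assume m: "0 < m"
    define qn where "qn n = (if n \<le> m*m then 1 / (real (m*m) + 1) else 0)" for n
    define enc where "enc X = prs P \<tau> (m*m) (read_array s m X)" for X
    define cost where "cost X = ln (real (m*m) + 1) + sum_list (map (\<lambda>t. - ln (qt t)) (enc X))" for X
    have Q: "(qn, qt) \<in> unigram_models Dict"
    proof -
      have s1: "qn sums (\<Sum>n\<in>{..m*m}. qn n)" by (rule sums_finite) (auto simp: qn_def)
      have e1: "(\<Sum>n\<in>{..m*m}. qn n) = 1"
      proof -
        have "0 \<le> real m * real m" by simp
        then have "(real m * real m + 1) \<noteq> 0" by linarith
        then show ?thesis by (simp add: qn_def)
      qed
      have "qn sums 1" using s1 unfolding e1 .
      then show ?thesis unfolding unigram_models_def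
        using qsum qt_pos by (auto simp: qn_def less_imp_le)
    qed
    have cost_eq: "neg_log (unigram_prob (qn, qt) (enc X)) = ereal (cost X)" if X: "X \<in> arrays m" for X
    proof -
      have lenr: "length (read_array s m X) = m*m" using read_bij[OF m s] X by (auto simp: bij_betw_def)
      have ne: "\<forall>t\<in>set (enc X). t \<noteq> []"
        using prs_set[OF mk pos tau(1) tau1] unfolding enc_def by (fastforce simp: Leaves_def)
      have "length (enc X) \<le> length (concat (enc X))"
        using ne by (rule len_concat_ge)
      then have le: "length (enc X) \<le> m*m" unfolding enc_def prs_concat lenr by simp
      have pp: "0 < prod_list (map qt (enc X))" using qt_pos by (simp add: prod_list_pos)
      have "unigram_prob (qn, qt) (enc X) = 1 / (real (m*m) + 1) * prod_list (map qt (enc X))"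
        using le by (simp add: unigram_prob_def qn_def)
      moreover have "ln (prod_list (map qt (enc X))) = sum_list (map (\<lambda>t. ln (qt t)) (enc X))"
        using qt_pos by (subst ln_prod_list) (auto simp: o_def)
      moreover have dpos: "0 < real m * real m + 1" by (simp add: add_nonneg_pos)
      ultimately show ?thesis using pp unfolding neg_log_def cost_def
        by (simp add: ln_mult ln_div sum_list_neg o_def)
    qed
    have cost_le: "cost X \<le> ln (real (m*m) + 1) + K + (1 + \<gamma>) * Fc P (read_array s m X)" if X: "X \<in> arrays m" for X
    proof -
      have lenr: "length (read_array s m X) = m*m" using read_bij[OF m s] X by (auto simp: bij_betw_def)
      have "sum_list (map (\<lambda>t. - ln (qt t)) (enc X)) \<le> (1 + \<gamma>) * Fc P (read_array s m X) + Lr * cs"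
        unfolding enc_def
        by (rule prs_cost[OF mk pos tau(1) tau1 g0 qc_leaf qc_single rem]) (simp_all add: lenr)
      then show ?thesis unfolding cost_def K_def by simp
    qed
    have pnn: "0 \<le> array_prob s P \<pi> m X" for X
    proof -
      have "0 \<le> cpm P \<pi> m (read_array s m X)"
        by (rule cpm_nonneg) (use pi_nonneg[OF mk st pos] Ppos[OF mk pos] in \<open>auto simp: less_imp_le\<close>)
      then show ?thesis by (simp add: array_prob_cpm[OF m s])
    qed
    define A where "A = ln (real (m*m) + 1) + K"
    define H where "H = entropy_rate P \<pi>"
    define b where "b = - ln (min_trans P)"
    define N where "N = real (m*m)"
    have N0: "0 < N" unfolding N_def using m by simp
    have step1: "best_unigram_loss s P \<pi> Dict enc m \<le>
        ereal (1 / (real m)^2) * (\<Sum>X\<in>arrays m. ereal (array_prob s P \<pi> m X) * neg_log (unigram_prob (qn, qt) (enc X)))"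
      unfolding best_unigram_loss_def by (rule INF_lower[OF Q])
    have step2: "(\<Sum>X\<in>arrays m. ereal (array_prob s P \<pi> m X) * neg_log (unigram_prob (qn, qt) (enc X)))
        = ereal (\<Sum>X\<in>arrays m. array_prob s P \<pi> m X * cost X)"
    proof -
      have "(\<Sum>X\<in>arrays m. ereal (array_prob s P \<pi> m X) * neg_log (unigram_prob (qn, qt) (enc X)))
         = (\<Sum>X\<in>arrays m. ereal (array_prob s P \<pi> m X * cost X))"
        by (intro sum.cong refl) (simp only: cost_eq times_ereal.simps(1))
      also have "\<dots> = ereal (\<Sum>X\<in>arrays m. array_prob s P \<pi> m X * cost X)"
        by (rule sum_ereal)
      finally show ?thesis .
    qed
    have step3: "(\<Sum>X\<in>arrays m. array_prob s P \<pi> m X * cost X) \<le>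
       (\<Sum>X\<in>arrays m. array_prob s P \<pi> m X * (A + (1 + \<gamma>) * Fc P (read_array s m X)))"
      unfolding A_def using pnn cost_le by (intro sum_mono mult_left_mono) auto
    have step4: "(\<Sum>X\<in>arrays m. array_prob s P \<pi> m X * (A + (1 + \<gamma>) * Fc P (read_array s m X)))
        = (\<Sum>y\<in>{y. length y = m*m}. cpm P \<pi> m y * (A + (1 + \<gamma>) * Fc P y))"
    proof -
      have "(\<Sum>X\<in>arrays m. array_prob s P \<pi> m X * (A + (1 + \<gamma>) * Fc P (read_array s m X)))
          = (\<Sum>X\<in>arrays m. (\<lambda>y. cpm P \<pi> m y * (A + (1 + \<gamma>) * Fc P y)) (read_array s m X))"
        by (intro sum.cong refl) (simp only: array_prob_cpm[OF m s])
      also have "\<dots> = (\<Sum>y\<in>{y. length y = m*m}. cpm P \<pi> m y * (A + (1 + \<gamma>) * Fc P y))"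
        by (rule sum.reindex_bij_betw[OF read_bij[OF m s]])
      finally show ?thesis .
    qed
    have step5: "(\<Sum>y\<in>{y. length y = m*m}. cpm P \<pi> m y * (A + (1 + \<gamma>) * Fc P y))
        = A * (\<Sum>y\<in>{y. length y = m*m}. cpm P \<pi> m y)
        + (1 + \<gamma>) * (\<Sum>y\<in>{y. length y = m*m}. cpm P \<pi> m y * Fc P y)"
    proof -
      have "(\<Sum>y\<in>{y. length y = m*m}. cpm P \<pi> m y * (A + (1 + \<gamma>) * Fc P y))
          = (\<Sum>y\<in>{y. length y = m*m}. A * cpm P \<pi> m y + (1 + \<gamma>) * (cpm P \<pi> m y * Fc P y))"
        by (intro sum.cong refl) (simp add: algebra_simps)
      also have "\<dots> = A * (\<Sum>y\<in>{y. length y = m*m}. cpm P \<pi> m y)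
        + (1 + \<gamma>) * (\<Sum>y\<in>{y. length y = m*m}. cpm P \<pi> m y * Fc P y)"
        by (simp only: sum.distrib sum_distrib_left)
      finally show ?thesis .
    qed
    have step6: "A * (\<Sum>y\<in>{y. length y = m*m}. cpm P \<pi> m y)
        + (1 + \<gamma>) * (\<Sum>y\<in>{y. length y = m*m}. cpm P \<pi> m y * Fc P y)
        \<le> A + (1 + \<gamma>) * (N * H + real m * b)"
    proof -
      have "(\<Sum>y\<in>{y. length y = m*m}. cpm P \<pi> m y * Fc P y) \<le> N * H + real m * b"
        unfolding N_def H_def b_def by (rule expect_F[OF mk st pos m])
      then have "(1 + \<gamma>) * (\<Sum>y\<in>{y. length y = m*m}. cpm P \<pi> m y * Fc P y) \<le> (1 + \<gamma>) * (N * H + real m * b)"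
        using g0 by (intro mult_left_mono) auto
      then show ?thesis using cpm_sum1[OF mk st, where n="m*m" and m=m] by simp
    qed
    have tot: "(\<Sum>X\<in>arrays m. array_prob s P \<pi> m X * cost X) \<le> A + (1 + \<gamma>) * (N * H + real m * b)"
      using step3 step4 step5 step6 by linarith
    have s12: "best_unigram_loss s P \<pi> Dict enc m \<le> ereal (1 / (real m)^2) * ereal (\<Sum>X\<in>arrays m. array_prob s P \<pi> m X * cost X)"
      using step1 unfolding step2 .
    also have "ereal (1 / (real m)^2) * ereal (\<Sum>X\<in>arrays m. array_prob s P \<pi> m X * cost X)
        = ereal ((\<Sum>X\<in>arrays m. array_prob s P \<pi> m X * cost X) / N)"
    proof -
      have "1 / (real m)^2 * (\<Sum>X\<in>arrays m. array_prob s P \<pi> m X * cost X) = (\<Sum>X\<in>arrays m. array_prob s P \<pi> m X * cost X) / N"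
        unfolding N_def by (simp add: power2_eq_square)
      then show ?thesis by (simp only: times_ereal.simps(1))
    qed
    also have "\<dots> \<le> ereal ((A + (1 + \<gamma>) * (N * H + real m * b)) / N)"
      using divide_right_mono[OF tot, of N] N0 by (simp only: ereal_less_eq(3))
    finally have "best_unigram_loss s P \<pi> Dict enc m \<le> ereal ((A + (1 + \<gamma>) * (N * H + real m * b)) / N)" .
    then show "best_unigram_loss s P \<pi> Dict (\<lambda>X. prs P \<tau> (m*m) (read_array s m X)) m
      \<le> ereal ((ln (real (m*m) + 1) + K + (1 + \<gamma>) *
           (real (m*m) * entropy_rate P \<pi> + real m * (- ln (min_trans P)))) / real (m*m))"
      unfolding enc_def A_def N_def H_def b_def .
  qed
  then show ?thesis unfolding Dict_def \<gamma>_def c_def T_def \<eta>_def C_def by blast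
qed


lemma u_le:
  assumes m: "0 < m"
  shows "(ln (real (m*m) + 1) + K + G * (real (m*m) * H + real m * b)) / real (m*m)
     \<le> G * H + (2 + \<bar>K\<bar> + \<bar>G * b\<bar>) / real m"
proof -
  have m1: "1 \<le> real m" using m by simp
  have "ln (real (m*m) + 1) \<le> ln ((real m + 1) * (real m + 1))"
  proof -
    have a: "real (m*m) + 1 \<le> (real m + 1) * (real m + 1)" by (simp add: algebra_simps)
    have "0 < real (m*m) + 1" by (simp add: add_nonneg_pos)
    then show ?thesis using a by (subst ln_le_cancel_iff) auto
  qed
  also have "\<dots> = 2 * ln (real m + 1)" by (simp add: ln_mult)
  also have "\<dots> \<le> 2 * real m" using ln_le_minus_one[of "real m + 1"] by simp
  finally have l: "ln (real (m*m) + 1) \<le> 2 * real m" .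
  have e: "(ln (real (m*m) + 1) + K + G * (real (m*m) * H + real m * b)) / real (m*m)
     = G * H + (ln (real (m*m) + 1) / real m + K / real m + G * b) / real m"
    using m by (simp add: field_simps)
  have "ln (real (m*m) + 1) / real m \<le> 2" using l m by (simp add: divide_le_eq)
  moreover have "K / real m \<le> \<bar>K\<bar>" using m1
    by (metis abs_ge_self abs_of_nonneg div_by_1 divide_left_mono le_divide_eq_1 linorder_not_le order_trans zero_le_one abs_ge_zero frac_le less_le_trans zero_less_one)
  moreover have "G * b \<le> \<bar>G * b\<bar>" by simp
  ultimately have "(ln (real (m*m) + 1) / real m + K / real m + G * b) \<le> 2 + \<bar>K\<bar> + \<bar>G * b\<bar>" by linarith
  then have "(ln (real (m*m) + 1) / real m + K / real m + G * b) / real m \<le> (2 + \<bar>K\<bar> + \<bar>G * b\<bar>) / real m"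
    using m by (intro divide_right_mono) auto
  then show ?thesis unfolding e by simp
qed

lemma limsup_le:
  assumes "\<forall>m>0. f m \<le> ereal ((ln (real (m*m) + 1) + K + G * (real (m*m) * H + real m * b)) / real (m*m))"
  shows "limsup f \<le> ereal (G * H)"
proof -
  define V where "V = 2 + \<bar>K\<bar> + \<bar>G * b\<bar>"
  have "limsup f \<le> limsup (\<lambda>m. ereal (G * H + V / real m))"
  proof (intro Limsup_mono)
    show "\<forall>\<^sub>F m in sequentially. f m \<le> ereal (G * H + V / real m)"
      using eventually_gt_at_top[of "0::nat"]
    proof eventually_elim
      case (elim m)
      then show ?case using assms u_le[OF elim, of K G H b] unfolding V_def
        by (meson ereal_less_eq(3) order_trans)
    qed
  qed
  also have "\<dots> = ereal (G * H)"
  proof (intro lim_imp_Limsup)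
    have "(\<lambda>m. G * H + V / real m) \<longlonglongrightarrow> G * H + 0"
      by (intro tendsto_add tendsto_const tendsto_divide_0[OF tendsto_const]) (rule filterlim_at_top_imp_at_infinity[OF filterlim_real_sequentially])
    then show "((\<lambda>m. ereal (G * H + V / real m)) \<longlongrightarrow> ereal (G * H)) sequentially"
      by (simp add: tendsto_ereal)
  qed simp
  finally show ?thesis .
qed


lemma card_delta:
  fixes P :: "'a::finite \<Rightarrow> 'a \<Rightarrow> real"
  assumes mk: "markov_kernel P" and pos: "min_trans P > 0"
  shows "real CARD('a) * min_trans P \<le> 1"
proof -
  obtain a :: 'a where True by simp
  have "real CARD('a) * min_trans P = (\<Sum>c::'a\<in>UNIV. min_trans P)" by simp
  also have "\<dots> \<le> (\<Sum>c::'a\<in>UNIV. P a c)" by (intro sum_mono Pmin[OF mk pos])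
  also have "\<dots> = 1" using mk by (simp add: markov_kernel_def)
  finally show ?thesis .
qed

lemma H_card1:
  fixes P :: "'a::finite \<Rightarrow> 'a \<Rightarrow> real"
  assumes mk: "markov_kernel P" and pos: "min_trans P > 0" and c: "CARD('a) = 1"
  shows "entropy_rate P \<pi> = 0"
proof -
  have "P a b = 1" for a b using card1_P[OF mk pos, of "1/2"] c by simp
  then show ?thesis unfolding entropy_rate_def by simp
qed

lemma final_ineq:
  fixes C b c lD H :: real
  assumes C2: "2 \<le> C" and bC: "ln C \<le> b" and cdef: "c = ln C - ln (1 - 1/1000)"
    and R: "1 + b + ln (2*C) + (b+1)/0.99 + (b*b + b * ln (2*C)) * 250 \<le> lD"
    and H0: "0 \<le> H"
  shows "(1 + c / (lD - b - ln (2*C))) * H \<le> H / (1 - b / (0.99 * lD))"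
proof -
  have lC: "1/2 \<le> ln C"
  proof -
    have "ln (1/2::real) \<le> 1/2 - 1" by (rule ln_le_minus_one) simp
    then have "1/2 \<le> ln (2::real)" by (simp add: ln_div)
    also have "ln 2 \<le> ln C" using C2 by simp
    finally show ?thesis .
  qed
  have kap: "- ln (1 - 1/1000::real) \<le> 1/999"
  proof -
    have "ln (1000/999::real) \<le> 1000/999 - 1" by (rule ln_le_minus_one) simp
    moreover have "ln (1000/999::real) = - ln (999/1000)" by (simp add: ln_div)
    ultimately show ?thesis by simp
  qed
  have b0: "0 \<le> b" using lC bC by linarith
  have l2C: "0 \<le> ln (2*C)" using C2 by simp
  define \<kappa> where "\<kappa> = - ln (1 - 1/1000::real)"
  have c\<kappa>: "c = ln C + \<kappa>" unfolding \<kappa>_def cdef by simp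
  have k1: "\<kappa> \<le> 1/999" unfolding \<kappa>_def by (rule kap)
  have bm00: "1/250 \<le> b - ln C*(99/100) - \<kappa>*(99/100)" using lC bC k1 by linarith
  have n99: "(0.99::real) = 99/100" by simp
  have bm: "1/250 \<le> b - c * (99/100)" using bm00 unfolding c\<kappa> distrib_right by linarith
  have k0: "0 \<le> \<kappa>" unfolding \<kappa>_def by simp
  have c0: "0 \<le> c" using lC k0 c\<kappa> by linarith
  have bb: "0 \<le> b*b + b * ln (2*C)" using b0 l2C by simp
  have q1: "0 \<le> (b+1)/0.99" using b0 by simp
  have q3: "0 \<le> (b*b + b * ln (2*C)) * 250" using bb by simp
  have lD0: "0 \<le> lD" using R q1 q3 b0 l2C by linarith
  have q2: "b + 1 \<le> lD * (99/100)"
  proof -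
    have "(b+1)/0.99 \<le> lD" using R q3 b0 l2C by linarith
    then have "(b+1)/(99/100) \<le> lD" by simp
    then show ?thesis by (simp add: divide_le_eq)
  qed
  define T where "T = lD - b - ln (2*C)"
  define Z where "Z = lD * (99/100) - b"
  have T0: "0 < T" unfolding T_def using R q1 q3 by linarith
  have Z0: "0 < Z" unfolding Z_def using q2 by linarith
  have lDp: "0 < lD" using T0 b0 l2C unfolding T_def by linarith
  have "(b*b + b * ln (2*C)) * 250 \<le> lD" using R q1 b0 l2C by linarith
  then have R250: "b*b + b * ln (2*C) \<le> lD / 250" by (simp add: le_divide_eq)
  have "lD / 250 \<le> lD * (b - c * (99/100))" using bm lD0 by (metis mult_left_mono divide_inverse inverse_eq_divide mult_1_right times_divide_eq_right)
  then have key0: "b*b + b * ln (2*C) \<le> lD * (b - c * (99/100))" using R250 by linarith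
  have cb: "0 \<le> c * b" using c0 b0 by simp
  have key: "c * Z \<le> b * T" unfolding Z_def T_def using key0 cb by (simp add: algebra_simps)
  have E: "1 - b / (0.99 * lD) = Z / (lD * (99/100))" unfolding Z_def using lDp by (simp add: field_simps)
  have "1 + c / T \<le> (lD * (99/100)) / Z"
  proof -
    have "(T + c) * Z \<le> (lD * (99/100)) * T" using key unfolding Z_def by (simp add: algebra_simps)
    then have "(T + c) / T \<le> (lD * (99/100)) / Z" using T0 Z0 by (simp add: divide_simps mult_ac)
    then show ?thesis using T0 by (simp add: add_divide_distrib)
  qed
  then have "(1 + c / T) * H \<le> ((lD * (99/100)) / Z) * H" using H0 by (rule mult_right_mono)
  also have "\<dots> = H / (1 - b / (0.99 * lD))" unfolding E using lDp Z0 by (simp add: mult_ac)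
  finally show ?thesis unfolding T_def .
qed

theorem proposition2:
  fixes P :: "'a::finite \<Rightarrow> 'a \<Rightarrow> real" and \<pi> :: "'a \<Rightarrow> real" and s :: nat
  assumes "markov_kernel P"
    and "stationary P \<pi>"
    and "min_trans P > 0"
    and "s \<in> {1, 2}"
  shows "\<exists>D0::nat. \<forall>D\<ge>D0. \<exists>Dict :: 'a list set. \<exists>enc :: nat \<Rightarrow> (nat \<Rightarrow> nat \<Rightarrow> 'a) \<Rightarrow> 'a list list.
           finite Dict \<and> card Dict \<le> D \<and> (\<forall>t\<in>Dict. t \<noteq> []) \<and>
           (\<forall>m. \<forall>X\<in>arrays m. set (enc m X) \<subseteq> Dict \<and> concat (enc m X) = read_array s m X) \<and>
           limsup (\<lambda>m. best_unigram_loss s P \<pi> Dict (enc m) m)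
             \<le> ereal (entropy_rate P \<pi> /
                 (1 - ln (1 / min_trans P) / (0.99 * ln (real D))))"
proof -
  note mk = assms(1) and st = assms(2) and pos = assms(3) and s = assms(4)
  define C where "C = real CARD('a)"
  define \<delta> where "\<delta> = min_trans P"
  define b where "b = - ln \<delta>"
  define c where "c = ln C - ln (1 - 1/1000::real)"
  define H where "H = entropy_rate P \<pi>"
  define R where "R = 1 + b + ln (2*C) + (b+1)/0.99 + (b*b + b * ln (2*C)) * 250"
  have C1: "1 \<le> C" unfolding C_def
    using finite_UNIV_card_ge_0[where 'a='a] by (simp add: Suc_le_eq)
  have d0: "0 < \<delta>" unfolding \<delta>_def using pos .
  have Cd: "C * \<delta> \<le> 1" unfolding C_def \<delta>_def by (rule card_delta[OF mk pos])
  have bC: "ln C \<le> b"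
  proof -
    have "\<delta> \<le> 1 / C" using Cd C1 by (simp add: le_divide_eq mult.commute)
    then have "ln \<delta> \<le> ln (1 / C)" using d0 C1 by (subst ln_le_cancel_iff) auto
    then show ?thesis unfolding b_def using C1 by (simp add: ln_div)
  qed
  have b0: "0 \<le> b" using bC C1 by (meson ln_ge_zero order_trans)
  have l2C: "0 \<le> ln (2*C)" using C1 by simp
  have H0: "0 \<le> H" unfolding H_def by (rule H_nonneg[OF mk st pos])
  have q1: "0 \<le> (b+1)/0.99" using b0 by simp
  have q3: "0 \<le> (b*b + b * ln (2*C)) * 250" using b0 l2C by simp
  have R2C: "ln (2*C) \<le> R" unfolding R_def using b0 q1 q3 by linarith
  show ?thesis
  proof (rule exI[where x="nat \<lceil>exp R\<rceil>"], intro allI impI)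
    fix D :: nat assume D: "nat \<lceil>exp R\<rceil> \<le> D"
    have DR: "exp R \<le> real D"
    proof -
      have "exp R \<le> real (nat \<lceil>exp R\<rceil>)" by linarith
      also have "\<dots> \<le> real D" by (rule of_nat_mono[OF D])
      finally show ?thesis .
    qed
    have Dpos: "0 < real D" using DR by (meson exp_gt_zero less_le_trans)
    have lD: "R \<le> ln (real D)" using DR Dpos by (metis ln_exp ln_le_cancel_iff exp_gt_zero)
    have C2D: "2 * C \<le> real D"
    proof -
      have "2 * C = exp (ln (2*C))" using C1 by simp
      also have "\<dots> \<le> exp R" using R2C by simp
      finally show ?thesis using DR by simp
    qed
    define \<tau> where "\<tau> = 2 * C / (\<delta> * real D)"
    have tau0: "0 < \<tau>" unfolding \<tau>_def using C1 d0 Dpos by simp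
    have lntau: "- ln \<tau> = ln (real D) - b - ln (2*C)"
      unfolding \<tau>_def b_def using C1 d0 Dpos by (simp add: ln_div ln_mult)
    have "ln (2*C) + b < R" unfolding R_def using b0 q1 q3 by linarith
    then have "0 < - ln \<tau>" using lntau lD by linarith
    then have tau1: "\<tau> < 1" using tau0 by simp
    define Dict where "Dict = Leaves P \<tau> \<union> range (\<lambda>x::'a. [x])"
    define enc where "enc m X = prs P \<tau> (m*m) (read_array s m X)" for m X
    obtain M where finL: "finite (Leaves P \<tau>)"
      using leaves_fin[OF mk pos tau0 less_imp_le[OF tau1]] by blast
    have finD: "finite Dict" unfolding Dict_def using finL by simp
    have cardL: "real (card (Leaves P \<tau>)) \<le> real D / 2"
    proof -
      have "real (card (Leaves P \<tau>)) * (\<tau> * \<delta>) \<le> C"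
        unfolding C_def \<delta>_def by (rule leaves_card[OF mk pos tau0 less_imp_le[OF tau1]])
      moreover have "\<tau> * \<delta> = 2 * C / real D" unfolding \<tau>_def using d0 by simp
      ultimately have "real (card (Leaves P \<tau>)) * (2 * C / real D) \<le> C" by simp
      then have "real (card (Leaves P \<tau>)) * (2 * C) \<le> C * real D" using Dpos
        by (simp add: divide_le_eq mult.commute)
      then have "real (card (Leaves P \<tau>)) * 2 \<le> real D" using C1 by (simp add: mult.commute mult.left_commute)
      then show ?thesis by simp
    qed
    have cardD: "card Dict \<le> D"
    proof -
      have "card Dict \<le> card (Leaves P \<tau>) + card (range (\<lambda>x::'a. [x]))"
        unfolding Dict_def by (rule card_Un_le)
      also have "card (range (\<lambda>x::'a. [x])) = CARD('a)" by (simp add: card_image inj_on_def)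
      finally have "real (card Dict) \<le> real (card (Leaves P \<tau>)) + C" unfolding C_def by linarith
      then have "real (card Dict) \<le> real D" using cardL C2D by linarith
      then show ?thesis by simp
    qed
    have ne: "\<forall>t\<in>Dict. t \<noteq> []" unfolding Dict_def by (auto simp: Leaves_def)
    have encok: "\<forall>m. \<forall>X\<in>arrays m. set (enc m X) \<subseteq> Dict \<and> concat (enc m X) = read_array s m X"
      unfolding enc_def Dict_def using prs_set[OF mk pos tau0 less_imp_le[OF tau1]] prs_concat by blast
    obtain K where K: "\<forall>m>0. best_unigram_loss s P \<pi> Dict (enc m) m
      \<le> ereal ((ln (real (m*m) + 1) + K +
         (1 + (ln (real CARD('a)) - ln (1 - 1/1000)) / (- ln \<tau>)) *
           (real (m*m) * entropy_rate P \<pi> + real m * (- ln (min_trans P)))) / real (m*m))"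
      using loss_bound[OF mk st pos s tau0 tau1] unfolding Dict_def enc_def by blast
    have lim: "limsup (\<lambda>m. best_unigram_loss s P \<pi> Dict (enc m) m)
        \<le> ereal ((1 + c / (ln (real D) - b - ln (2*C))) * H)"
      using limsup_le[OF K] unfolding lntau C_def[symmetric] H_def[symmetric] c_def[symmetric] .
    have fin: "(1 + c / (ln (real D) - b - ln (2*C))) * H \<le> H / (1 - b / (0.99 * ln (real D)))"
    proof (cases "CARD('a) = 1")
      case True
      then have "H = 0" unfolding H_def by (rule H_card1[OF mk pos])
      then show ?thesis by simp
    next
      case False
      then have "2 \<le> CARD('a)"
      proof -
        have "0 < CARD('a)" by (rule finite_UNIV_card_ge_0) simp
        then show ?thesis using False by linarith
      qed
      then have C2: "2 \<le> C" unfolding C_def by simp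
      show ?thesis
        by (rule final_ineq[OF C2 bC c_def _ H0]) (use lD in \<open>simp add: R_def\<close>)
    qed
    have bb: "ln (1 / min_trans P) = b" unfolding b_def \<delta>_def using pos by (simp add: ln_div)
    have "limsup (\<lambda>m. best_unigram_loss s P \<pi> Dict (enc m) m)
             \<le> ereal (entropy_rate P \<pi> / (1 - ln (1 / min_trans P) / (0.99 * ln (real D))))"
      using lim fin unfolding bb H_def by (meson ereal_less_eq(3) order_trans)
    then show "\<exists>Dict :: 'a list set. \<exists>enc :: nat \<Rightarrow> (nat \<Rightarrow> nat \<Rightarrow> 'a) \<Rightarrow> 'a list list.
           finite Dict \<and> card Dict \<le> D \<and> (\<forall>t\<in>Dict. t \<noteq> []) \<and>
           (\<forall>m. \<forall>X\<in>arrays m. set (enc m X) \<subseteq> Dict \<and> concat (enc m X) = read_array s m X) \<and>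
           limsup (\<lambda>m. best_unigram_loss s P \<pi> Dict (enc m) m)
             \<le> ereal (entropy_rate P \<pi> /
                 (1 - ln (1 / min_trans P) / (0.99 * ln (real D))))"
      using finD cardD ne encok by blast
  qed
qed


end
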